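(* On Gauss diagrams of twisted knot diagrams, the forbidden move $F1$ can be realized by a finite sequence of moves $F2$, $T2$ and $T3$, and the forbidden move $F2$ can be realized by a finite sequence of moves $F1$, $T2$ and $T3$. Consequently, in the presence of $T2$ and $T3$, allowing $F1$ is equivalent to allowing $F2$.
   Context: A twisted knot diagram is a virtual knot diagram (an oriented generic immersed circle in the plane whose double points are either classical crossings, carrying over/under information, or virtual crossings, carrying none) which may in addition carry finitely many bars: short segments marked transversally on arcs, away from crossings. Gauss diagram of a twisted knot diagram: an oriented circle (the parametrizing circle of the knot) on which are marked, in the order met when traversing the knot from a basepoint, the two preimages of each classical crossing and one point for each bar. For each classical crossing a chord joins its two preimages, oriented from the overcrossing preimage (the arrowtail) to the undercrossing preimage (the arrowhead), and labelled by the sign $\varepsilon\in\{+,-\}$ of the crossing. Virtual crossings are not recorded. Two marked points (chord endpoints or bars) are called adjacent if no other marked point lies between them on the circle. Moves on Gauss diagrams (each may be applied in either direction): - $T2$: add or remove two adjacent bars. - $T3$: if each endpoint of a chord is immediately preceded and immediately followed by a bar, remove these four bars, reverse the orientation of the chord and change its sign (the Gauss-diagram version of the twisted Reidemeister move in which a classical crossing having a bar on each of its four incident arcs next to the crossing is replaced by the crossing with over- and under-strand exchanged, the four bars being removed). - $F1$: exchange the positions of two adjacent arrowheads of different chords (signs arbitrary). - $F2$: exchange the positions of two adjacent arrowtails of different chords (signs arbitrary). *)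

theory Defs
  imports Main
begin

text \<open>A Gauss diagram of a twisted knot diagram is encoded as the cyclic word of marked
points met along the parametrizing circle, read from some basepoint.  A marked point is a
bar, or the arrowtail / arrowhead of the chord with label c and sign s (True = +).
Changing the basepoint (rotating the word) gives the same Gauss diagram.\<close>

datatype mark = Bar | Tl nat bool | Hd nat bool

fun is_end_of :: "nat \<Rightarrow> mark \<Rightarrow> bool" where
  "is_end_of c Bar = False"
| "is_end_of c (Tl d s) = (c = d)"
| "is_end_of c (Hd d s) = (c = d)"

definition chords :: "mark list \<Rightarrow> nat set" where
  "chords D = {c. \<exists>m\<in>set D. is_end_of c m}"

definition gauss_diagram :: "mark list \<Rightarrow> bool" where
  "gauss_diagram D \<longleftrightarrow> (\<forall>c\<in>chords D. length (filter (is_end_of c) D) = 2 \<and>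
      (\<exists>s. Tl c s \<in> set D \<and> Hd c s \<in> set D))"

definition rot :: "mark list \<Rightarrow> mark list \<Rightarrow> bool" where
  "rot D D' \<longleftrightarrow> (\<exists>k. D' = rotate k D)"

text \<open>Local moves on a linear reading of the word (adjacency across the basepoint is handled
by first rotating, see cyc).\<close>

definition T2_add :: "mark list \<Rightarrow> mark list \<Rightarrow> bool" where
  "T2_add D D' \<longleftrightarrow> (\<exists>u v. D = u @ v \<and> D' = u @ [Bar, Bar] @ v)"

definition T2 :: "mark list \<Rightarrow> mark list \<Rightarrow> bool" where
  "T2 D D' \<longleftrightarrow> T2_add D D' \<or> T2_add D' D"

definition T3_fwd :: "mark list \<Rightarrow> mark list \<Rightarrow> bool" where
  "T3_fwd D D' \<longleftrightarrow> (\<exists>u v w c s.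
     (D = u @ [Bar, Tl c s, Bar] @ v @ [Bar, Hd c s, Bar] @ w \<and>
      D' = u @ [Hd c (\<not> s)] @ v @ [Tl c (\<not> s)] @ w) \<or>
     (D = u @ [Bar, Hd c s, Bar] @ v @ [Bar, Tl c s, Bar] @ w \<and>
      D' = u @ [Tl c (\<not> s)] @ v @ [Hd c (\<not> s)] @ w))"

definition T3 :: "mark list \<Rightarrow> mark list \<Rightarrow> bool" where
  "T3 D D' \<longleftrightarrow> T3_fwd D D' \<or> T3_fwd D' D"

definition F1 :: "mark list \<Rightarrow> mark list \<Rightarrow> bool" where
  "F1 D D' \<longleftrightarrow> (\<exists>u v a b s t. a \<noteq> b \<and>
     D = u @ [Hd a s, Hd b t] @ v \<and> D' = u @ [Hd b t, Hd a s] @ v)"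

definition F2 :: "mark list \<Rightarrow> mark list \<Rightarrow> bool" where
  "F2 D D' \<longleftrightarrow> (\<exists>u v a b s t. a \<noteq> b \<and>
     D = u @ [Tl a s, Tl b t] @ v \<and> D' = u @ [Tl b t, Tl a s] @ v)"

definition cyc :: "(mark list \<Rightarrow> mark list \<Rightarrow> bool) \<Rightarrow> mark list \<Rightarrow> mark list \<Rightarrow> bool" where
  "cyc R D D' \<longleftrightarrow> (\<exists>k. R (rotate k D) D')"

definition moves :: "(mark list \<Rightarrow> mark list \<Rightarrow> bool) list \<Rightarrow> mark list \<Rightarrow> mark list \<Rightarrow> bool" where
  "moves Rs = (\<lambda>x y. rot x y \<or> (\<exists>R\<in>set Rs. cyc R x y))\<^sup>*\<^sup>*"

end

theory Submission
  imports Defs "HOL-Library.Multiset"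
begin

lemma moves_trans[trans]: "moves Rs x y \<Longrightarrow> moves Rs y z \<Longrightarrow> moves Rs x z"
  unfolding moves_def by (rule rtranclp_trans)

lemma mv_R: "R x y \<Longrightarrow> R \<in> set Rs \<Longrightarrow> moves Rs x y"
  unfolding moves_def cyc_def
  by (rule r_into_rtranclp) (metis rotate0 id_apply)

lemma mv_rot: "moves Rs x (rotate k x)"
  unfolding moves_def rot_def by (rule r_into_rtranclp) blast

lemma t2a: "T2 \<in> set Rs \<Longrightarrow> X = u @ v \<Longrightarrow> Y = u @ Bar # Bar # v \<Longrightarrow> moves Rs X Y"
  by (rule mv_R[of T2]) (auto simp: T2_def T2_add_def)

lemma t2d: "T2 \<in> set Rs \<Longrightarrow> X = u @ Bar # Bar # v \<Longrightarrow> Y = u @ v \<Longrightarrow> moves Rs X Y"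
  by (rule mv_R[of T2]) (auto simp: T2_def T2_add_def)

lemma t3h: "T3 \<in> set Rs \<Longrightarrow> X = u @ [Bar, Hd c s, Bar] @ v @ [Bar, Tl c s, Bar] @ w
  \<Longrightarrow> Y = u @ [Tl c (\<not> s)] @ v @ [Hd c (\<not> s)] @ w \<Longrightarrow> moves Rs X Y"
  by (rule mv_R[of T3]) (unfold T3_def T3_fwd_def, blast)+

lemma t3h': "T3 \<in> set Rs \<Longrightarrow> X = u @ [Bar, Hd c s, Bar] @ v @ [Bar, Tl c s, Bar] @ w
  \<Longrightarrow> Y = u @ [Tl c (\<not> s)] @ v @ [Hd c (\<not> s)] @ w \<Longrightarrow> moves Rs Y X"
  by (rule mv_R[of T3]) (unfold T3_def T3_fwd_def, blast)+

lemma t3t: "T3 \<in> set Rs \<Longrightarrow> X = u @ [Bar, Tl c s, Bar] @ v @ [Bar, Hd c s, Bar] @ w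
  \<Longrightarrow> Y = u @ [Hd c (\<not> s)] @ v @ [Tl c (\<not> s)] @ w \<Longrightarrow> moves Rs X Y"
  by (rule mv_R[of T3]) (unfold T3_def T3_fwd_def, blast)+

lemma t3t': "T3 \<in> set Rs \<Longrightarrow> X = u @ [Bar, Tl c s, Bar] @ v @ [Bar, Hd c s, Bar] @ w
  \<Longrightarrow> Y = u @ [Hd c (\<not> s)] @ v @ [Tl c (\<not> s)] @ w \<Longrightarrow> moves Rs Y X"
  by (rule mv_R[of T3]) (unfold T3_def T3_fwd_def, blast)+

lemma f2m: "F2 \<in> set Rs \<Longrightarrow> a \<noteq> b \<Longrightarrow> X = u @ [Tl a s, Tl b t] @ v
  \<Longrightarrow> Y = u @ [Tl b t, Tl a s] @ v \<Longrightarrow> moves Rs X Y"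
  by (rule mv_R[of F2]) (unfold F2_def, blast)+

lemma f1m: "F1 \<in> set Rs \<Longrightarrow> a \<noteq> b \<Longrightarrow> X = u @ [Hd a s, Hd b t] @ v
  \<Longrightarrow> Y = u @ [Hd b t, Hd a s] @ v \<Longrightarrow> moves Rs X Y"
  by (rule mv_R[of F1]) (unfold F1_def, blast)+

lemma chainH:
  assumes ab: "a \<noteq> b"
  shows "moves [F2, T2, T3] ([Hd a s, Hd b t] @ p @ [Tl a s] @ q @ [Tl b t] @ r)
                            ([Hd b t, Hd a s] @ p @ [Tl a s] @ q @ [Tl b t] @ r)"
proof -
  let ?R = "[F2, T2, T3]"
  have "moves ?R ([Hd a s, Hd b t] @ p @ [Tl a s] @ q @ [Tl b t] @ r)
     ([Bar,Bar,Hd a s, Hd b t] @ p @ [Tl a s] @ q @ [Tl b t] @ r)"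
    by (rule t2a[where u="[]"]) simp_all
  also have "moves ?R \<dots> ([Bar,Bar,Hd a s,Bar,Bar, Hd b t] @ p @ [Tl a s] @ q @ [Tl b t] @ r)"
    by (rule t2a[where u="[Bar,Bar,Hd a s]"]) simp_all
  also have "moves ?R \<dots> ([Bar,Bar,Hd a s,Bar,Bar, Hd b t,Bar,Bar] @ p @ [Tl a s] @ q @ [Tl b t] @ r)"
    by (rule t2a[where u="[Bar,Bar,Hd a s,Bar,Bar, Hd b t]"]) simp_all
  also have "moves ?R \<dots> ([Bar,Bar,Hd a s,Bar,Bar, Hd b t,Bar,Bar] @ p @ [Bar,Bar,Tl a s] @ q @ [Tl b t] @ r)"
    by (rule t2a[where u="[Bar,Bar,Hd a s,Bar,Bar, Hd b t,Bar,Bar] @ p"]) simp_all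
  also have "moves ?R \<dots> ([Bar,Bar,Hd a s,Bar,Bar, Hd b t,Bar,Bar] @ p @ [Bar,Bar,Tl a s,Bar,Bar] @ q @ [Tl b t] @ r)"
    by (rule t2a[where u="[Bar,Bar,Hd a s,Bar,Bar, Hd b t,Bar,Bar] @ p @ [Bar,Bar,Tl a s]"]) simp_all
  also have "moves ?R \<dots> ([Bar,Bar,Hd a s,Bar,Bar, Hd b t,Bar,Bar] @ p @ [Bar,Bar,Tl a s,Bar,Bar] @ q @ [Bar,Bar,Tl b t] @ r)"
    by (rule t2a[where u="[Bar,Bar,Hd a s,Bar,Bar, Hd b t,Bar,Bar] @ p @ [Bar,Bar,Tl a s,Bar,Bar] @ q"]) simp_all
  also have "moves ?R \<dots> ([Bar,Bar,Hd a s,Bar,Bar, Hd b t,Bar,Bar] @ p @ [Bar,Bar,Tl a s,Bar,Bar] @ q @ [Bar,Bar,Tl b t,Bar,Bar] @ r)"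
    by (rule t2a[where u="[Bar,Bar,Hd a s,Bar,Bar, Hd b t,Bar,Bar] @ p @ [Bar,Bar,Tl a s,Bar,Bar] @ q @ [Bar,Bar,Tl b t]"]) simp_all
  also have "moves ?R \<dots> ([Bar,Tl a (\<not>s),Bar,Hd b t,Bar,Bar] @ p @ [Bar,Hd a (\<not>s),Bar] @ q @ [Bar,Bar,Tl b t,Bar,Bar] @ r)"
    by (rule t3h[where u="[Bar]" and v="[Bar,Hd b t,Bar,Bar] @ p @ [Bar]" and w="[Bar] @ q @ [Bar,Bar,Tl b t,Bar,Bar] @ r"]) simp_all
  also have "moves ?R \<dots> ([Bar,Tl a (\<not>s),Tl b (\<not>t),Bar] @ p @ [Bar,Hd a (\<not>s),Bar] @ q @ [Bar,Hd b (\<not>t),Bar] @ r)"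
    by (rule t3h[where u="[Bar,Tl a (\<not>s)]" and v="[Bar] @ p @ [Bar,Hd a (\<not>s),Bar] @ q @ [Bar]" and w="[Bar] @ r"]) simp_all
  also have "moves ?R \<dots> ([Bar,Tl b (\<not>t),Tl a (\<not>s),Bar] @ p @ [Bar,Hd a (\<not>s),Bar] @ q @ [Bar,Hd b (\<not>t),Bar] @ r)"
    by (rule f2m[where u="[Bar]"]) (simp_all add: ab)
  also have "moves ?R \<dots> ([Bar,Tl b (\<not>t),Bar,Bar,Tl a (\<not>s),Bar] @ p @ [Bar,Hd a (\<not>s),Bar] @ q @ [Bar,Hd b (\<not>t),Bar] @ r)"
    by (rule t2a[where u="[Bar,Tl b (\<not>t)]"]) simp_all
  also have "moves ?R \<dots> ([Bar,Bar,Hd b t,Bar,Bar,Bar,Tl a (\<not>s),Bar] @ p @ [Bar,Hd a (\<not>s),Bar] @ q @ [Bar,Bar,Tl b t,Bar,Bar] @ r)"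
    by (rule t3h'[where u="[Bar]" and v="[Bar,Bar,Tl a (\<not>s),Bar] @ p @ [Bar,Hd a (\<not>s),Bar] @ q @ [Bar]" and w="[Bar] @ r"]) simp_all
  also have "moves ?R \<dots> ([Bar,Bar,Hd b t,Bar,Bar,Bar,Bar,Hd a s,Bar,Bar] @ p @ [Bar,Bar,Tl a s,Bar,Bar] @ q @ [Bar,Bar,Tl b t,Bar,Bar] @ r)"
    by (rule t3h'[where u="[Bar,Bar,Hd b t,Bar,Bar,Bar]" and v="[Bar] @ p @ [Bar]" and w="[Bar] @ q @ [Bar,Bar,Tl b t,Bar,Bar] @ r"]) simp_all
  also have "moves ?R \<dots> ([Hd b t,Bar,Bar,Bar,Bar,Hd a s,Bar,Bar] @ p @ [Bar,Bar,Tl a s,Bar,Bar] @ q @ [Bar,Bar,Tl b t,Bar,Bar] @ r)"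
    by (rule t2d[where u="[]"]) simp_all
  also have "moves ?R \<dots> ([Hd b t,Bar,Bar,Hd a s,Bar,Bar] @ p @ [Bar,Bar,Tl a s,Bar,Bar] @ q @ [Bar,Bar,Tl b t,Bar,Bar] @ r)"
    by (rule t2d[where u="[Hd b t]"]) simp_all
  also have "moves ?R \<dots> ([Hd b t,Hd a s,Bar,Bar] @ p @ [Bar,Bar,Tl a s,Bar,Bar] @ q @ [Bar,Bar,Tl b t,Bar,Bar] @ r)"
    by (rule t2d[where u="[Hd b t]"]) simp_all
  also have "moves ?R \<dots> ([Hd b t,Hd a s] @ p @ [Bar,Bar,Tl a s,Bar,Bar] @ q @ [Bar,Bar,Tl b t,Bar,Bar] @ r)"
    by (rule t2d[where u="[Hd b t,Hd a s]"]) simp_all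
  also have "moves ?R \<dots> ([Hd b t,Hd a s] @ p @ [Tl a s,Bar,Bar] @ q @ [Bar,Bar,Tl b t,Bar,Bar] @ r)"
    by (rule t2d[where u="[Hd b t,Hd a s] @ p"]) simp_all
  also have "moves ?R \<dots> ([Hd b t,Hd a s] @ p @ [Tl a s] @ q @ [Bar,Bar,Tl b t,Bar,Bar] @ r)"
    by (rule t2d[where u="[Hd b t,Hd a s] @ p @ [Tl a s]"]) simp_all
  also have "moves ?R \<dots> ([Hd b t,Hd a s] @ p @ [Tl a s] @ q @ [Tl b t,Bar,Bar] @ r)"
    by (rule t2d[where u="[Hd b t,Hd a s] @ p @ [Tl a s] @ q"]) simp_all
  also have "moves ?R \<dots> ([Hd b t,Hd a s] @ p @ [Tl a s] @ q @ [Tl b t] @ r)"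
    by (rule t2d[where u="[Hd b t,Hd a s] @ p @ [Tl a s] @ q @ [Tl b t]"]) simp_all
  finally show ?thesis .
qed

lemma chainT:
  assumes ab: "a \<noteq> b"
  shows "moves [F1, T2, T3] ([Tl a s, Tl b t] @ p @ [Hd a s] @ q @ [Hd b t] @ r)
                            ([Tl b t, Tl a s] @ p @ [Hd a s] @ q @ [Hd b t] @ r)"
proof -
  let ?R = "[F1, T2, T3]"
  have "moves ?R ([Tl a s, Tl b t] @ p @ [Hd a s] @ q @ [Hd b t] @ r)
     ([Bar,Bar,Tl a s, Tl b t] @ p @ [Hd a s] @ q @ [Hd b t] @ r)"
    by (rule t2a[where u="[]"]) simp_all
  also have "moves ?R \<dots> ([Bar,Bar,Tl a s,Bar,Bar, Tl b t] @ p @ [Hd a s] @ q @ [Hd b t] @ r)"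
    by (rule t2a[where u="[Bar,Bar,Tl a s]"]) simp_all
  also have "moves ?R \<dots> ([Bar,Bar,Tl a s,Bar,Bar, Tl b t,Bar,Bar] @ p @ [Hd a s] @ q @ [Hd b t] @ r)"
    by (rule t2a[where u="[Bar,Bar,Tl a s,Bar,Bar, Tl b t]"]) simp_all
  also have "moves ?R \<dots> ([Bar,Bar,Tl a s,Bar,Bar, Tl b t,Bar,Bar] @ p @ [Bar,Bar,Hd a s] @ q @ [Hd b t] @ r)"
    by (rule t2a[where u="[Bar,Bar,Tl a s,Bar,Bar, Tl b t,Bar,Bar] @ p"]) simp_all
  also have "moves ?R \<dots> ([Bar,Bar,Tl a s,Bar,Bar, Tl b t,Bar,Bar] @ p @ [Bar,Bar,Hd a s,Bar,Bar] @ q @ [Hd b t] @ r)"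
    by (rule t2a[where u="[Bar,Bar,Tl a s,Bar,Bar, Tl b t,Bar,Bar] @ p @ [Bar,Bar,Hd a s]"]) simp_all
  also have "moves ?R \<dots> ([Bar,Bar,Tl a s,Bar,Bar, Tl b t,Bar,Bar] @ p @ [Bar,Bar,Hd a s,Bar,Bar] @ q @ [Bar,Bar,Hd b t] @ r)"
    by (rule t2a[where u="[Bar,Bar,Tl a s,Bar,Bar, Tl b t,Bar,Bar] @ p @ [Bar,Bar,Hd a s,Bar,Bar] @ q"]) simp_all
  also have "moves ?R \<dots> ([Bar,Bar,Tl a s,Bar,Bar, Tl b t,Bar,Bar] @ p @ [Bar,Bar,Hd a s,Bar,Bar] @ q @ [Bar,Bar,Hd b t,Bar,Bar] @ r)"
    by (rule t2a[where u="[Bar,Bar,Tl a s,Bar,Bar, Tl b t,Bar,Bar] @ p @ [Bar,Bar,Hd a s,Bar,Bar] @ q @ [Bar,Bar,Hd b t]"]) simp_all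
  also have "moves ?R \<dots> ([Bar,Hd a (\<not>s),Bar,Tl b t,Bar,Bar] @ p @ [Bar,Tl a (\<not>s),Bar] @ q @ [Bar,Bar,Hd b t,Bar,Bar] @ r)"
    by (rule t3t[where u="[Bar]" and v="[Bar,Tl b t,Bar,Bar] @ p @ [Bar]" and w="[Bar] @ q @ [Bar,Bar,Hd b t,Bar,Bar] @ r"]) simp_all
  also have "moves ?R \<dots> ([Bar,Hd a (\<not>s),Hd b (\<not>t),Bar] @ p @ [Bar,Tl a (\<not>s),Bar] @ q @ [Bar,Tl b (\<not>t),Bar] @ r)"
    by (rule t3t[where u="[Bar,Hd a (\<not>s)]" and v="[Bar] @ p @ [Bar,Tl a (\<not>s),Bar] @ q @ [Bar]" and w="[Bar] @ r"]) simp_all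
  also have "moves ?R \<dots> ([Bar,Hd b (\<not>t),Hd a (\<not>s),Bar] @ p @ [Bar,Tl a (\<not>s),Bar] @ q @ [Bar,Tl b (\<not>t),Bar] @ r)"
    by (rule f1m[where u="[Bar]"]) (simp_all add: ab)
  also have "moves ?R \<dots> ([Bar,Hd b (\<not>t),Bar,Bar,Hd a (\<not>s),Bar] @ p @ [Bar,Tl a (\<not>s),Bar] @ q @ [Bar,Tl b (\<not>t),Bar] @ r)"
    by (rule t2a[where u="[Bar,Hd b (\<not>t)]"]) simp_all
  also have "moves ?R \<dots> ([Bar,Bar,Tl b t,Bar,Bar,Bar,Hd a (\<not>s),Bar] @ p @ [Bar,Tl a (\<not>s),Bar] @ q @ [Bar,Bar,Hd b t,Bar,Bar] @ r)"
    by (rule t3t'[where u="[Bar]" and v="[Bar,Bar,Hd a (\<not>s),Bar] @ p @ [Bar,Tl a (\<not>s),Bar] @ q @ [Bar]" and w="[Bar] @ r"]) simp_all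
  also have "moves ?R \<dots> ([Bar,Bar,Tl b t,Bar,Bar,Bar,Bar,Tl a s,Bar,Bar] @ p @ [Bar,Bar,Hd a s,Bar,Bar] @ q @ [Bar,Bar,Hd b t,Bar,Bar] @ r)"
    by (rule t3t'[where u="[Bar,Bar,Tl b t,Bar,Bar,Bar]" and v="[Bar] @ p @ [Bar]" and w="[Bar] @ q @ [Bar,Bar,Hd b t,Bar,Bar] @ r"]) simp_all
  also have "moves ?R \<dots> ([Tl b t,Bar,Bar,Bar,Bar,Tl a s,Bar,Bar] @ p @ [Bar,Bar,Hd a s,Bar,Bar] @ q @ [Bar,Bar,Hd b t,Bar,Bar] @ r)"
    by (rule t2d[where u="[]"]) simp_all
  also have "moves ?R \<dots> ([Tl b t,Bar,Bar,Tl a s,Bar,Bar] @ p @ [Bar,Bar,Hd a s,Bar,Bar] @ q @ [Bar,Bar,Hd b t,Bar,Bar] @ r)"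
    by (rule t2d[where u="[Tl b t]"]) simp_all
  also have "moves ?R \<dots> ([Tl b t,Tl a s,Bar,Bar] @ p @ [Bar,Bar,Hd a s,Bar,Bar] @ q @ [Bar,Bar,Hd b t,Bar,Bar] @ r)"
    by (rule t2d[where u="[Tl b t]"]) simp_all
  also have "moves ?R \<dots> ([Tl b t,Tl a s] @ p @ [Bar,Bar,Hd a s,Bar,Bar] @ q @ [Bar,Bar,Hd b t,Bar,Bar] @ r)"
    by (rule t2d[where u="[Tl b t,Tl a s]"]) simp_all
  also have "moves ?R \<dots> ([Tl b t,Tl a s] @ p @ [Hd a s,Bar,Bar] @ q @ [Bar,Bar,Hd b t,Bar,Bar] @ r)"
    by (rule t2d[where u="[Tl b t,Tl a s] @ p"]) simp_all
  also have "moves ?R \<dots> ([Tl b t,Tl a s] @ p @ [Hd a s] @ q @ [Bar,Bar,Hd b t,Bar,Bar] @ r)"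
    by (rule t2d[where u="[Tl b t,Tl a s] @ p @ [Hd a s]"]) simp_all
  also have "moves ?R \<dots> ([Tl b t,Tl a s] @ p @ [Hd a s] @ q @ [Hd b t,Bar,Bar] @ r)"
    by (rule t2d[where u="[Tl b t,Tl a s] @ p @ [Hd a s] @ q"]) simp_all
  also have "moves ?R \<dots> ([Tl b t,Tl a s] @ p @ [Hd a s] @ q @ [Hd b t] @ r)"
    by (rule t2d[where u="[Tl b t,Tl a s] @ p @ [Hd a s] @ q @ [Hd b t]"]) simp_all
  finally show ?thesis .
qed



lemma mset_rotate[simp]: "mset (rotate k x) = mset x"
  by (metis rotate_drop_take append_take_drop_id mset_append add.commute)

definition G :: "mark multiset \<Rightarrow> bool" where
  "G M \<longleftrightarrow> (\<forall>c. filter_mset (is_end_of c) M = {#} \<or> (\<exists>s. filter_mset (is_end_of c) M = {#Tl c s, Hd c s#}))"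

lemma gauss_G: "gauss_diagram D \<longleftrightarrow> G (mset D)"
proof
  assume g: "gauss_diagram D"
  show "G (mset D)" unfolding G_def
  proof
    fix c
    show "filter_mset (is_end_of c) (mset D) = {#} \<or> (\<exists>s. filter_mset (is_end_of c) (mset D) = {#Tl c s, Hd c s#})"
    proof (cases "c \<in> chords D")
      case False
      hence "filter (is_end_of c) D = []" unfolding chords_def by (auto simp: filter_empty_conv)
      then show ?thesis by (metis mset_filter mset_zero_iff_right)
    next
      case True
      with g obtain s where l: "length (filter (is_end_of c) D) = 2" and "Tl c s \<in> set D" "Hd c s \<in> set D"
        unfolding gauss_diagram_def by blast
      hence i: "Tl c s \<in> set (filter (is_end_of c) D)" "Hd c s \<in> set (filter (is_end_of c) D)" by auto
      obtain x y where xy: "filter (is_end_of c) D = [x, y]" using l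
        by (metis (no_types, lifting) One_nat_def Suc_1 length_0_conv length_Suc_conv)
      with i have "{#x, y#} = {#Tl c s, Hd c s#}" by auto
      then show ?thesis using xy by (metis mset.simps mset_filter)
    qed
  qed
next
  assume g: "G (mset D)"
  show "gauss_diagram D" unfolding gauss_diagram_def
  proof
    fix c assume "c \<in> chords D"
    then obtain m where m: "m \<in> set D" "is_end_of c m" unfolding chords_def by blast
    hence "m \<in># filter_mset (is_end_of c) (mset D)" by simp
    hence "filter_mset (is_end_of c) (mset D) \<noteq> {#}" by auto
    with g obtain s where e: "mset (filter (is_end_of c) D) = {#Tl c s, Hd c s#}" unfolding G_def
      by (metis mset_filter)
    hence "length (filter (is_end_of c) D) = 2" by (metis size_mset size_add_mset size_empty One_nat_def Suc_1)
    moreover have "Tl c s \<in># mset (filter (is_end_of c) D)" "Hd c s \<in># mset (filter (is_end_of c) D)"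
      unfolding e by simp_all
    hence "Tl c s \<in> set (filter (is_end_of c) D)" "Hd c s \<in> set (filter (is_end_of c) D)"
      by (simp_all only: set_mset_mset)
    hence "Tl c s \<in> set D" "Hd c s \<in> set D" by auto
    ultimately show "length (filter (is_end_of c) D) = 2 \<and> (\<exists>s. Tl c s \<in> set D \<and> Hd c s \<in> set D)" by blast
  qed
qed

lemma Gc_pair: "(filter_mset (is_end_of c) M + {#Tl c s, Hd c s#} = {#} \<or>
   (\<exists>s'. filter_mset (is_end_of c) M + {#Tl c s, Hd c s#} = {#Tl c s', Hd c s'#}))
   \<longleftrightarrow> filter_mset (is_end_of c) M = {#}"
proof
  assume "filter_mset (is_end_of c) M + {#Tl c s, Hd c s#} = {#} \<or>
   (\<exists>s'. filter_mset (is_end_of c) M + {#Tl c s, Hd c s#} = {#Tl c s', Hd c s'#})"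
  then obtain s' where "filter_mset (is_end_of c) M + {#Tl c s, Hd c s#} = {#Tl c s', Hd c s'#}" by auto
  hence "size (filter_mset (is_end_of c) M + {#Tl c s, Hd c s#}) = 2" by simp
  thus "filter_mset (is_end_of c) M = {#}" by simp
next
  assume "filter_mset (is_end_of c) M = {#}"
  thus "filter_mset (is_end_of c) M + {#Tl c s, Hd c s#} = {#} \<or>
   (\<exists>s'. filter_mset (is_end_of c) M + {#Tl c s, Hd c s#} = {#Tl c s', Hd c s'#})"
    by (intro disjI2 exI[of _ s]) simp
qed

lemma G_swap:
  assumes "\<forall>d. d \<noteq> c \<longrightarrow> filter_mset (is_end_of d) N1 = {#} \<and> filter_mset (is_end_of d) N2 = {#}"
    "filter_mset (is_end_of c) N1 = {#Tl c sa, Hd c sa#}" "filter_mset (is_end_of c) N2 = {#Tl c sb, Hd c sb#}"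
  shows "G (M + N1) \<longleftrightarrow> G (M + N2)"
proof -
  have "(filter_mset (is_end_of d) (M + N1) = {#} \<or> (\<exists>s. filter_mset (is_end_of d) (M + N1) = {#Tl d s, Hd d s#}))
     \<longleftrightarrow> (filter_mset (is_end_of d) (M + N2) = {#} \<or> (\<exists>s. filter_mset (is_end_of d) (M + N2) = {#Tl d s, Hd d s#}))" (is "?L \<longleftrightarrow> ?R") for d
    proof (cases "d = c")
      case True
      have "?L \<longleftrightarrow> filter_mset (is_end_of c) M = {#}"
        using Gc_pair[of c M sa] assms(2) True by simp
      moreover have "?R \<longleftrightarrow> filter_mset (is_end_of c) M = {#}"
        using Gc_pair[of c M sb] assms(3) True by simp
      ultimately show ?thesis by simp
    next
      case False
      have "filter_mset (is_end_of d) (M + N1) = filter_mset (is_end_of d) M"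
           "filter_mset (is_end_of d) (M + N2) = filter_mset (is_end_of d) M"
        using assms(1) False by simp_all
      thus ?thesis by (simp only:)
    qed
  thus ?thesis unfolding G_def by simp
qed

lemma T3_G: assumes "T3_fwd z y" shows "G (mset z) \<longleftrightarrow> G (mset y)"
  using assms unfolding T3_fwd_def
proof (elim exE disjE conjE)
  fix u v w c s assume z: "z = u @ [Bar, Tl c s, Bar] @ v @ [Bar, Hd c s, Bar] @ w"
    and y: "y = u @ [Hd c (\<not> s)] @ v @ [Tl c (\<not> s)] @ w"
  have "mset z = mset (u@v@w) + {#Bar,Bar,Bar,Bar,Tl c s, Hd c s#}" "mset y = mset (u@v@w) + {#Tl c (\<not>s), Hd c (\<not>s)#}"
    unfolding z y by (simp_all add: ac_simps)
  thus ?thesis by (simp only:) (rule G_swap[where c=c and sa=s and sb="\<not>s"], auto)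
next
  fix u v w c s assume z: "z = u @ [Bar, Hd c s, Bar] @ v @ [Bar, Tl c s, Bar] @ w"
    and y: "y = u @ [Tl c (\<not> s)] @ v @ [Hd c (\<not> s)] @ w"
  have "mset z = mset (u@v@w) + {#Bar,Bar,Bar,Bar,Tl c s, Hd c s#}" "mset y = mset (u@v@w) + {#Tl c (\<not>s), Hd c (\<not>s)#}"
    unfolding z y by (simp_all add: ac_simps)
  thus ?thesis by (simp only:) (rule G_swap[where c=c and sa=s and sb="\<not>s"], auto)
qed

lemma T2_G: assumes "T2_add z y" shows "G (mset z) \<longleftrightarrow> G (mset y)"
proof -
  obtain u v where "z = u @ v" "y = u @ [Bar, Bar] @ v" using assms unfolding T2_add_def by blast
  hence "filter_mset (is_end_of d) (mset y) = filter_mset (is_end_of d) (mset z)" for d by simp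
  thus ?thesis unfolding G_def by simp
qed

lemma step_gauss:
  assumes "set Rs \<subseteq> {F1, F2, T2, T3}" "gauss_diagram x" "rot x y \<or> (\<exists>R\<in>set Rs. cyc R x y)"
  shows "gauss_diagram y"
proof -
  have gx: "G (mset x)" using assms(2) gauss_G by blast
  from assms(3) show ?thesis
  proof
    assume "rot x y" thus ?thesis using gx gauss_G unfolding rot_def by auto
  next
    assume "\<exists>R\<in>set Rs. cyc R x y"
    then obtain R k where R: "R \<in> {F1, F2, T2, T3}" "R (rotate k x) y" using assms(1) unfolding cyc_def by blast
    have gz: "G (mset (rotate k x))" using gx by simp
    from R have "G (mset y)"
    proof (elim insertE emptyE)
      assume "R = F1"
      then obtain u v a b s t where e: "rotate k x = u @ [Hd a s, Hd b t] @ v" "y = u @ [Hd b t, Hd a s] @ v"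
        using R unfolding F1_def by blast
      have "mset y = mset (rotate k x)" unfolding e by (simp add: add_mset_commute)
      thus ?thesis using gx by simp
    next
      assume "R = F2"
      then obtain u v a b s t where e: "rotate k x = u @ [Tl a s, Tl b t] @ v" "y = u @ [Tl b t, Tl a s] @ v"
        using R unfolding F2_def by blast
      have "mset y = mset (rotate k x)" unfolding e by (simp add: add_mset_commute)
      thus ?thesis using gx by simp
    next
      assume "R = T2" thus ?thesis using R gz T2_G unfolding T2_def by blast
    next
      assume "R = T3" thus ?thesis using R gz T3_G unfolding T3_def by blast
    qed
    thus ?thesis using gauss_G by blast
  qed
qed


lemma rot_back: "\<exists>m. x = rotate m (rotate k x)"
proof (cases "x = []")
  case True thus ?thesis by simp
next
  case False
  have "rotate (length x - k mod length x) (rotate k x) = rotate (length x - k mod length x + k) x"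
    by (simp add: rotate_rotate)
  also have "\<dots> = x"
  proof (rule rotate_id)
    have "(length x - k mod length x + k) mod length x = (length x - k mod length x + k mod length x) mod length x"
      by (simp add: mod_add_right_eq)
    also have "\<dots> = 0" using False by simp
    finally show "(length x - k mod length x + k) mod length x = 0" .
  qed
  finally show ?thesis by metis
qed

lemma moves_sym:
  assumes sym: "\<And>R x y. R \<in> set Rs \<Longrightarrow> R x y \<Longrightarrow> R y x" and m: "moves Rs x y"
  shows "moves Rs y x"
proof -
  have stp: "moves Rs b a" if "rot a b \<or> (\<exists>R\<in>set Rs. cyc R a b)" for a b
    using that
  proof
    assume "rot a b"
    then obtain k where "b = rotate k a" unfolding rot_def by blast
    with rot_back obtain m where "a = rotate m b" by blast
    thus ?thesis using mv_rot by metis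
  next
    assume "\<exists>R\<in>set Rs. cyc R a b"
    then obtain R k where R: "R \<in> set Rs" "R (rotate k a) b" unfolding cyc_def by blast
    have "moves Rs b (rotate k a)" using mv_R[OF sym[OF R] R(1)] .
    moreover obtain m where "a = rotate m (rotate k a)" using rot_back by blast
    hence "moves Rs (rotate k a) a" using mv_rot by metis
    ultimately show ?thesis by (rule moves_trans)
  qed
  from m[unfolded moves_def] show ?thesis
  proof (induction rule: rtranclp_induct)
    case base thus ?case unfolding moves_def by simp
  next
    case (step a b)
    have "moves Rs b a" using step(2) by (rule stp)
    thus ?case using step(3) by (rule moves_trans)
  qed
qed

lemma F1_sym: assumes "F1 x y" shows "F1 y x"
proof -
  obtain u v a b s t where "a \<noteq> b" "x = u @ [Hd a s, Hd b t] @ v" "y = u @ [Hd b t, Hd a s] @ v"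
    using assms unfolding F1_def by blast
  thus ?thesis unfolding F1_def by (intro exI[of _ u] exI[of _ v] exI[of _ b] exI[of _ a] exI[of _ t] exI[of _ s]) auto
qed
lemma F2_sym: assumes "F2 x y" shows "F2 y x"
proof -
  obtain u v a b s t where "a \<noteq> b" "x = u @ [Tl a s, Tl b t] @ v" "y = u @ [Tl b t, Tl a s] @ v"
    using assms unfolding F2_def by blast
  thus ?thesis unfolding F2_def by (intro exI[of _ u] exI[of _ v] exI[of _ b] exI[of _ a] exI[of _ t] exI[of _ s]) auto
qed
lemma T2_sym: "T2 x y \<Longrightarrow> T2 y x" unfolding T2_def by blast
lemma T3_sym: "T3 x y \<Longrightarrow> T3 y x" unfolding T3_def by blast

lemma sym_all: "R \<in> {F1, F2, T2, T3} \<Longrightarrow> R x y \<Longrightarrow> R y x"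
  using F1_sym F2_sym T2_sym T3_sym by blast

lemma tails:
  assumes g: "gauss_diagram ([H a s, H b t] @ w)" and ab: "a \<noteq> b"
    and HT: "(H = Hd \<and> T = Tl) \<or> (H = Tl \<and> T = Hd)"
  shows "T a s \<in> set w"
proof -
  have G: "G (mset ([H a s, H b t] @ w))" using g gauss_G by blast
  have e: "filter_mset (is_end_of a) (mset ([H a s, H b t] @ w)) = add_mset (H a s) (filter_mset (is_end_of a) (mset w))"
    using ab HT by auto
  then obtain s' where s': "add_mset (H a s) (filter_mset (is_end_of a) (mset w)) = {#Tl a s', Hd a s'#}"
    using G unfolding G_def by (metis empty_not_add_mset)
  have "H a s \<in># {#Tl a s', Hd a s'#}" by (metis s' union_single_eq_member)
  hence "s' = s" using HT by auto
  have "T a s' \<in># add_mset (H a s) (filter_mset (is_end_of a) (mset w))" using s' HT by auto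
  hence "T a s \<in># filter_mset (is_end_of a) (mset w)" using HT \<open>s' = s\<close> by auto
  thus ?thesis by simp
qed

lemma swapH:
  assumes ab: "a \<noteq> b" and i: "Tl a s \<in> set w" "Tl b t \<in> set w"
  shows "moves [F2, T2, T3] ([Hd a s, Hd b t] @ w) ([Hd b t, Hd a s] @ w)"
proof -
  obtain w1 w2 where w: "w = w1 @ Tl a s # w2" using i(1) split_list by metis
  have "Tl b t \<in> set w1 \<or> Tl b t \<in> set w2" using i(2) w ab by auto
  thus ?thesis
  proof
    assume "Tl b t \<in> set w2"
    then obtain q r where "w2 = q @ Tl b t # r" using split_list by metis
    thus ?thesis using chainH[OF ab, of s t w1 q r] w by simp
  next
    assume "Tl b t \<in> set w1"
    then obtain p q where p: "w1 = p @ Tl b t # q" using split_list by metis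
    have "moves [F2, T2, T3] ([Hd b t, Hd a s] @ w) ([Hd a s, Hd b t] @ w)"
      using chainH[of b a t s p q w2] ab w p by simp
    thus ?thesis by (rule moves_sym[rotated]) (auto intro: sym_all)
  qed
qed

lemma swapT:
  assumes ab: "a \<noteq> b" and i: "Hd a s \<in> set w" "Hd b t \<in> set w"
  shows "moves [F1, T2, T3] ([Tl a s, Tl b t] @ w) ([Tl b t, Tl a s] @ w)"
proof -
  obtain w1 w2 where w: "w = w1 @ Hd a s # w2" using i(1) split_list by metis
  have "Hd b t \<in> set w1 \<or> Hd b t \<in> set w2" using i(2) w ab by auto
  thus ?thesis
  proof
    assume "Hd b t \<in> set w2"
    then obtain q r where "w2 = q @ Hd b t # r" using split_list by metis
    thus ?thesis using chainT[OF ab, of s t w1 q r] w by simp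
  next
    assume "Hd b t \<in> set w1"
    then obtain p q where p: "w1 = p @ Hd b t # q" using split_list by metis
    have "moves [F1, T2, T3] ([Tl b t, Tl a s] @ w) ([Tl a s, Tl b t] @ w)"
      using chainT[of b a t s p q w2] ab w p by simp
    thus ?thesis by (rule moves_sym[rotated]) (auto intro: sym_all)
  qed
qed

lemma part1:
  assumes g: "gauss_diagram D" and c: "cyc F1 D D'"
  shows "moves [F2, T2, T3] D D'"
proof -
  obtain k u v a b s t where ab: "a \<noteq> b" and e: "rotate k D = u @ [Hd a s, Hd b t] @ v"
    and D': "D' = u @ [Hd b t, Hd a s] @ v"
    using c unfolding cyc_def F1_def by blast
  let ?E = "[Hd a s, Hd b t] @ v @ u"
  have E: "rotate (length u) (rotate k D) = ?E" unfolding e by (metis append.assoc rotate_append)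
  have gE: "gauss_diagram ?E" using g gauss_G by (metis E mset_rotate)
  have "Tl a s \<in> set (v @ u)" using tails[OF gE ab] by blast
  moreover have "Tl b t \<in> set (v @ u)"
  proof -
    have "mset ([Hd b t, Hd a s] @ v @ u) = mset ?E" by (simp add: add_mset_commute)
    hence "gauss_diagram ([Hd b t, Hd a s] @ v @ u)" using gE gauss_G by metis
    thus ?thesis using tails[of Hd b t a s "v @ u" Tl] ab by blast
  qed
  ultimately have m: "moves [F2, T2, T3] ?E ([Hd b t, Hd a s] @ v @ u)" using swapH ab by blast
  have "moves [F2, T2, T3] D (rotate k D)" by (rule mv_rot)
  also have "moves [F2, T2, T3] \<dots> ?E" using mv_rot E by metis
  also note m
  also have "moves [F2, T2, T3] ([Hd b t, Hd a s] @ v @ u) D'"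
  proof -
    have "D' = rotate (length ([Hd b t, Hd a s] @ v)) (([Hd b t, Hd a s] @ v) @ u)"
      unfolding D' by (simp only: rotate_append)
    thus ?thesis using mv_rot by (metis append.assoc)
  qed
  finally show ?thesis .
qed

lemma part2:
  assumes g: "gauss_diagram D" and c: "cyc F2 D D'"
  shows "moves [F1, T2, T3] D D'"
proof -
  obtain k u v a b s t where ab: "a \<noteq> b" and e: "rotate k D = u @ [Tl a s, Tl b t] @ v"
    and D': "D' = u @ [Tl b t, Tl a s] @ v"
    using c unfolding cyc_def F2_def by blast
  let ?E = "[Tl a s, Tl b t] @ v @ u"
  have E: "rotate (length u) (rotate k D) = ?E" unfolding e by (metis append.assoc rotate_append)
  have gE: "gauss_diagram ?E" using g gauss_G by (metis E mset_rotate)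
  have "Hd a s \<in> set (v @ u)" using tails[OF gE ab] by blast
  moreover have "Hd b t \<in> set (v @ u)"
  proof -
    have "mset ([Tl b t, Tl a s] @ v @ u) = mset ?E" by (simp add: add_mset_commute)
    hence "gauss_diagram ([Tl b t, Tl a s] @ v @ u)" using gE gauss_G by metis
    thus ?thesis using tails[of Tl b t a s "v @ u" Hd] ab by blast
  qed
  ultimately have m: "moves [F1, T2, T3] ?E ([Tl b t, Tl a s] @ v @ u)" using swapT ab by blast
  have "moves [F1, T2, T3] D (rotate k D)" by (rule mv_rot)
  also have "moves [F1, T2, T3] \<dots> ?E" using mv_rot E by metis
  also note m
  also have "moves [F1, T2, T3] ([Tl b t, Tl a s] @ v @ u) D'"
  proof -
    have "D' = rotate (length ([Tl b t, Tl a s] @ v)) (([Tl b t, Tl a s] @ v) @ u)"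
      unfolding D' by (simp only: rotate_append)
    thus ?thesis using mv_rot by (metis append.assoc)
  qed
  finally show ?thesis .
qed

lemma part3a:
  assumes "moves [F1, T2, T3] D D'" "gauss_diagram D"
  shows "moves [F2, T2, T3] D D'"
proof -
  have "moves [F2, T2, T3] D D' \<and> gauss_diagram D'" using assms unfolding moves_def
  proof (induction rule: rtranclp_induct)
    case base thus ?case by simp
  next
    case (step y z)
    hence gy: "gauss_diagram y" and my: "moves [F2, T2, T3] D y" unfolding moves_def by auto
    have gz: "gauss_diagram z" using step_gauss[of "[F1, T2, T3]" y z, OF _ gy step(2)] by simp
    have "moves [F2, T2, T3] y z"
    proof -
      from step(2) consider "rot y z" | "cyc F1 y z" | "cyc T2 y z" | "cyc T3 y z" by auto
      thus ?thesis
      proof cases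
        case 1 thus ?thesis unfolding moves_def by (intro r_into_rtranclp) simp
      next
        case 2 thus ?thesis using part1[OF gy] by blast
      next
        case 3 thus ?thesis unfolding moves_def by (intro r_into_rtranclp) simp
      next
        case 4 thus ?thesis unfolding moves_def by (intro r_into_rtranclp) simp
      qed
    qed
    with my gz show ?case unfolding moves_def by auto
  qed
  thus ?thesis by blast
qed

lemma part3b:
  assumes "moves [F2, T2, T3] D D'" "gauss_diagram D"
  shows "moves [F1, T2, T3] D D'"
proof -
  have "moves [F1, T2, T3] D D' \<and> gauss_diagram D'" using assms unfolding moves_def
  proof (induction rule: rtranclp_induct)
    case base thus ?case by simp
  next
    case (step y z)
    hence gy: "gauss_diagram y" and my: "moves [F1, T2, T3] D y" unfolding moves_def by auto
    have gz: "gauss_diagram z" using step_gauss[of "[F2, T2, T3]" y z, OF _ gy step(2)] by simp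
    have "moves [F1, T2, T3] y z"
    proof -
      from step(2) consider "rot y z" | "cyc F2 y z" | "cyc T2 y z" | "cyc T3 y z" by auto
      thus ?thesis
      proof cases
        case 1 thus ?thesis unfolding moves_def by (intro r_into_rtranclp) simp
      next
        case 2 thus ?thesis using part2[OF gy] by blast
      next
        case 3 thus ?thesis unfolding moves_def by (intro r_into_rtranclp) simp
      next
        case 4 thus ?thesis unfolding moves_def by (intro r_into_rtranclp) simp
      qed
    qed
    with my gz show ?case unfolding moves_def by auto
  qed
  thus ?thesis by blast
qed

theorem mainTheorem3:
  shows "(\<forall>D D'. gauss_diagram D \<longrightarrow> cyc F1 D D' \<longrightarrow> moves [F2, T2, T3] D D') \<and>
         (\<forall>D D'. gauss_diagram D \<longrightarrow> cyc F2 D D' \<longrightarrow> moves [F1, T2, T3] D D') \<and>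
         (\<forall>D D'. gauss_diagram D \<longrightarrow>
            (moves [F1, T2, T3] D D' \<longleftrightarrow> moves [F2, T2, T3] D D'))"
  using part1 part2 part3a part3b by blast

end
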